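(* Let $x,y\in\mathbb{H}^2$ and $d=d\big(\tfrac{x+y}{2},\partial\mathbb{H}^2\big)$. Then $$\tilde\tau_{\mathbb{H}^2}(x,y)\ge\begin{cases}\log\Big(1+\sqrt{\frac{|x-y|}{d}}\Big), & |x-y|>2d,\\[1mm] \log\Big(1+\frac{2|x-y|}{\sqrt{4d^2+|x-y|^2}}\Big), & |x-y|\le 2d,\end{cases}$$ and, if $|x-y|<2d$, $$\tilde\tau_{\mathbb{H}^2}(x,y)\le\log\Big(1+\frac{2|x-y|}{\sqrt{4d^2-|x-y|^2}}\Big).$$
   Context: $\mathbb{H}^2=\{(x_1,x_2)\in\mathbb{R}^2:x_2>0\}$, $\partial\mathbb{H}^2$ is the real axis, $d(z,\partial\mathbb{H}^2)$ is Euclidean distance. For a proper subdomain $D\subsetneq\mathbb{R}^n$ and $x,y\in D$, $\tilde\tau_D(x,y)=\log\big(1+\sup_{p\in\partial D}\frac{|x-y|}{\sqrt{|x-p||y-p|}}\big)$ (the scale invariant Cassinian metric). *)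

theory Defs
  imports "HOL-Analysis.Analysis"
begin

definition H2 :: "complex set" where
  "H2 = {z. Im z > 0}"

definition scale_inv_cassinian :: "'a::euclidean_space set \<Rightarrow> 'a \<Rightarrow> 'a \<Rightarrow> real" where
  "scale_inv_cassinian D x y =
     ln (1 + (SUP p\<in>frontier D. norm (x - y) / sqrt (norm (x - p) * norm (y - p))))"

end

theory Submission
  imports Defs
begin

lemma frontier_H2: "frontier H2 = {z. Im z = 0}"
proof -
  have "H2 = {z. \<i> \<bullet> z > 0}" by (simp add: H2_def inner_complex_def)
  moreover have "frontier {z::complex. \<i> \<bullet> z > 0} = {z. \<i> \<bullet> z = 0}"
    by (rule frontier_halfspace_gt) simp
  ultimately show ?thesis by (simp add: inner_complex_def)
qed

lemma infdist_real_axis: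
  assumes "Im m > 0"
  shows "infdist m {z. Im z = 0} = Im m"
proof (rule antisym)
  have "of_real (Re m) \<in> {z. Im z = 0}" by simp
  moreover have "dist m (of_real (Re m)) = Im m"
    using assms by (simp add: dist_norm cmod_def)
  ultimately show "infdist m {z. Im z = 0} \<le> Im m" by (metis infdist_le)
next
  have ne: "{z. Im z = 0} \<noteq> {}" by (metis Im_complex_of_real mem_Collect_eq empty_iff)
  show "Im m \<le> infdist m {z. Im z = 0}"
    unfolding infdist_notempty[OF ne]
  proof (rule cINF_greatest[OF ne])
    fix a assume "a \<in> {z. Im z = 0}"
    hence "Im m = \<bar>Im (m - a)\<bar>" using assms by simp
    also have "\<dots> \<le> dist m a" using abs_Im_le_cmod[of "m-a"] by (simp add: dist_norm)
    finally show "Im m \<le> dist m a" .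
  qed
qed

lemma prod_eq:
  fixes x y p :: complex
  shows "norm (x - p) * norm (y - p) = norm (((x+y)/2 - p)^2 - ((x-y)/2)^2)"
proof -
  have "(x - p) * (y - p) = ((x+y)/2 - p)^2 - ((x-y)/2)^2"
    by (simp add: field_simps power2_eq_square)
  thus ?thesis by (metis norm_mult)
qed

lemma div_anti:
  fixes a b c :: real
  assumes "0 \<le> c" "0 < a" "a \<le> b"
  shows "c / b \<le> c / a"
  using assms by (intro divide_left_mono) auto

theorem theorem3p12:
  fixes x y :: complex and d :: real
  assumes "x \<in> H2" and "y \<in> H2"
    and "d = infdist ((x + y) / 2) (frontier H2)"
  shows "scale_inv_cassinian H2 x y \<ge>
           (if norm (x - y) > 2 * d
            then ln (1 + sqrt (norm (x - y) / d))
            else ln (1 + 2 * norm (x - y) / sqrt (4 * d^2 + (norm (x - y))^2)))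
         \<and> (norm (x - y) < 2 * d \<longrightarrow>
           scale_inv_cassinian H2 x y \<le> ln (1 + 2 * norm (x - y) / sqrt (4 * d^2 - (norm (x - y))^2)))"
proof -
  define m where "m = (x+y)/2"
  define w where "w = (x-y)/2"
  define c where "c = norm (x - y)"
  define g where "g = (\<lambda>p. norm (x - y) / sqrt (norm (x - p) * norm (y - p)))"
  have sx: "Im x > 0" and sy: "Im y > 0" using assms(1,2) by (auto simp: H2_def)
  have dm: "d = Im m" using assms(3) sx sy
    by (simp add: m_def frontier_H2 infdist_real_axis)
  have dpos: "d > 0" using dm sx sy by (simp add: m_def)
  have cw: "c = 2 * norm w" by (simp add: c_def w_def norm_divide)
  have w2: "(Im w)^2 < d^2"
  proof -
    have "\<bar>Im w\<bar> < d" using sx sy dm by (simp add: w_def m_def)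
    thus ?thesis using power_strict_mono[of "\<bar>Im w\<bar>" d 2] by simp
  qed
  have Npos: "norm (x - p) * norm (y - p) > 0" if "Im p = 0" for p
    using sx sy that by (auto simp: complex_eq_iff)
  have Nform: "norm (x - p) * norm (y - p) = norm ((m - p)^2 - w^2)" for p
    unfolding m_def w_def by (rule prod_eq)
  have ne: "frontier H2 \<noteq> {}" unfolding frontier_H2
    by (metis Im_complex_of_real mem_Collect_eq empty_iff)
  have gbound: "g p \<le> c / sqrt (Im x * Im y)" if "Im p = 0" for p
  proof -
    have "Im x \<le> norm (x - p)" using that sx abs_Im_le_cmod[of "x-p"] by simp
    moreover have "Im y \<le> norm (y - p)" using that sy abs_Im_le_cmod[of "y-p"] by simp
    ultimately have "Im x * Im y \<le> norm (x - p) * norm (y - p)"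
      using sx sy by (intro mult_mono) auto
    hence "sqrt (Im x * Im y) \<le> sqrt (norm (x - p) * norm (y - p))" by simp
    moreover have "sqrt (Im x * Im y) > 0" using sx sy by simp
    ultimately show ?thesis unfolding g_def c_def
      using Npos[OF that] by (intro div_anti) auto
  qed
  have bdd: "bdd_above (g ` frontier H2)"
    unfolding frontier_H2 using gbound by (intro bdd_aboveI2) auto
  have S_def: "scale_inv_cassinian H2 x y = ln (1 + (SUP p\<in>frontier H2. g p))"
    by (simp add: scale_inv_cassinian_def g_def)
  have gnn: "g p \<ge> 0" for p by (simp add: g_def)
  have upper: "g p \<le> (SUP p\<in>frontier H2. g p)" if "Im p = 0" for p
    using that bdd by (intro cSUP_upper) (auto simp: frontier_H2)
  have lnmono: "ln (1 + a) \<le> ln (1 + b)" if "0 \<le> a" "a \<le> b" for a b :: real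
    using that by simp
  have Snn: "(SUP p\<in>frontier H2. g p) \<ge> 0"
    using upper[of 0] gnn[of 0] by simp
  have L1: "2 * c / sqrt (4 * d^2 + c^2) \<le> (SUP p\<in>frontier H2. g p)"
  proof -
    define p :: complex where "p = of_real (Re m)"
    have ip: "Im p = 0" by (simp add: p_def)
    have "m - p = \<i> * d" using dm by (simp add: p_def complex_eq_iff)
    hence "(m - p)^2 = - of_real (d^2)" by (simp add: power_mult_distrib)
    hence "norm (x - p) * norm (y - p) = norm (- of_real (d^2) - w^2)"
      using Nform[of p] by simp
    also have "\<dots> \<le> norm (- of_real (d^2) :: complex) + norm (w^2)"
      by (rule norm_triangle_ineq4)
    also have "\<dots> = d^2 + (norm w)^2" by (simp add: norm_power)
    also have "\<dots> = (4 * d^2 + c^2) / 4" using cw by (simp add: power2_eq_square)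
    finally have N: "norm (x - p) * norm (y - p) \<le> (4 * d^2 + c^2) / 4" .
    have "sqrt (norm (x - p) * norm (y - p)) \<le> sqrt ((4 * d^2 + c^2) / 4)"
      using N by simp
    also have "\<dots> = sqrt (4 * d^2 + c^2) / 2" by (simp add: real_sqrt_divide)
    finally have "sqrt (norm (x - p) * norm (y - p)) \<le> sqrt (4 * d^2 + c^2) / 2" .
    hence "c / (sqrt (4 * d^2 + c^2) / 2) \<le> g p"
      unfolding g_def c_def using Npos[OF ip]
      by (intro div_anti) auto
    moreover have "c / (sqrt (4 * d^2 + c^2) / 2) = 2 * c / sqrt (4 * d^2 + c^2)" by simp
    ultimately show ?thesis using upper[OF ip] by (metis order_trans)
  qed
  have L2: "sqrt (c / d) \<le> (SUP p\<in>frontier H2. g p)" if big: "c > 2 * d"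
  proof -
    define w1 where "w1 = Re w"
    define w2 where "w2 = Im w"
    have nw: "(norm w)^2 = w1^2 + w2^2" by (simp add: w1_def w2_def cmod_power2)
    define q where "q = w1^2 + w2^2 - d^2"
    have "norm w > d" using big cw by simp
    hence "(norm w)^2 > d^2" using dpos by (simp add: power_strict_mono)
    hence qpos: "q > 0" using nw by (simp add: q_def)
    define Q where "Q = sqrt q"
    have Q2: "Q^2 = q" and Qnn: "Q \<ge> 0" using qpos by (auto simp: Q_def)
    define r where "r = (if w1 * w2 \<ge> 0 then - Q else Q)"
    have r2: "r^2 = q" using Q2 by (simp add: r_def)
    have rk: "r * (w1 * w2) = - Q * \<bar>w1 * w2\<bar>" by (simp add: r_def)
    have w2d: "w2^2 < d^2" using w2 by (simp add: w2_def)
    have aw2: "\<bar>w2\<bar> < d" using w2d dpos by (metis abs_of_pos power2_abs power_less_imp_less_base less_imp_le)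
    have Qw1: "Q \<le> \<bar>w1\<bar>"
    proof -
      have "Q^2 \<le> \<bar>w1\<bar>^2" using Q2 w2d by (simp add: q_def)
      thus ?thesis using Qnn by (metis abs_ge_zero power2_le_imp_le)
    qed
    have key0: "w2^2 * (q - d^2) \<le> 2 * d * Q * (\<bar>w1\<bar> * \<bar>w2\<bar>)"
    proof (cases "q \<le> d^2")
      case True
      hence "w2^2 * (q - d^2) \<le> 0" by (simp add: mult_nonneg_nonpos)
      also have "0 \<le> 2 * d * Q * (\<bar>w1\<bar> * \<bar>w2\<bar>)" using dpos Qnn by simp
      finally show ?thesis .
    next
      case False
      have "w2^2 * (q - d^2) \<le> w2^2 * q" using dpos by (simp add: mult_left_mono)
      also have "\<dots> = \<bar>w2\<bar> * \<bar>w2\<bar> * Q * Q" using Q2 by (simp add: power2_eq_square)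
      also have "\<dots> \<le> \<bar>w2\<bar> * d * Q * \<bar>w1\<bar>"
        using aw2 Qw1 Qnn by (intro mult_mono) auto
      also have "\<dots> \<le> 2 * d * Q * (\<bar>w1\<bar> * \<bar>w2\<bar>)"
        using dpos Qnn by (simp add: mult_nonneg_nonneg algebra_simps)
      finally show ?thesis .
    qed
    have key: "(r^2 - d^2 - w1^2 + w2^2)^2 + (2*d*r + 2*w1*w2)^2 \<le> (c * d)^2"
    proof -
      have h1: "r^2 - d^2 - w1^2 + w2^2 = 2 * (w2^2 - d^2)" using r2 by (simp add: q_def)
      have e1: "(r^2 - d^2 - w1^2 + w2^2)^2 = 4 * (w2^2 - d^2)^2"
        unfolding h1 by (simp only: power_mult_distrib) simp
      have e2': "(2*d*r + 2*w1*w2)^2 = 4 * (d^2 * r^2 + 2 * d * (r * (w1 * w2)) + w1^2 * w2^2)"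
        by (simp add: power2_eq_square algebra_simps)
      have e2: "(2*d*r + 2*w1*w2)^2 = 4 * (d^2 * q + 2 * d * (r * (w1 * w2)) + w1^2 * w2^2)"
        unfolding e2' r2 ..
      have e3: "(c * d)^2 = 4 * ((w1^2 + w2^2) * d^2)" using cw nw by (simp add: power_mult_distrib)
      have "\<bar>w1 * w2\<bar> = \<bar>w1\<bar> * \<bar>w2\<bar>" by (simp add: abs_mult)
      thus ?thesis unfolding e1 e2 e3 rk using key0
        by (simp add: q_def power2_eq_square algebra_simps)
    qed
    define p :: complex where "p = of_real (Re m + r)"
    have ip: "Im p = 0" by (simp add: p_def)
    have u: "m - p = Complex (- r) d" using dm by (simp add: p_def complex_eq_iff)
    have wc: "w = Complex w1 w2" by (simp add: w1_def w2_def)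
    have "Re ((m - p)^2 - w^2) = r^2 - d^2 - w1^2 + w2^2"
      unfolding u wc by (simp add: power2_eq_square)
    moreover have "Im ((m - p)^2 - w^2) = -(2*d*r + 2*w1*w2)"
      unfolding u wc by (simp add: power2_eq_square)
    ultimately have "norm ((m - p)^2 - w^2) = sqrt ((r^2 - d^2 - w1^2 + w2^2)^2 + (2*d*r + 2*w1*w2)^2)"
      using power2_minus[of "2*d*r + 2*w1*w2"] by (simp add: cmod_def del: power2_minus)
    also have "\<dots> \<le> sqrt ((c * d)^2)" using key by (rule real_sqrt_le_mono)
    also have "\<dots> = c * d" using dpos big by simp
    finally have N: "norm (x - p) * norm (y - p) \<le> c * d" using Nform[of p] by simp
    have "sqrt (norm (x - p) * norm (y - p)) \<le> sqrt (c * d)" using N by simp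
    hence "c / sqrt (c * d) \<le> g p"
      unfolding g_def c_def using Npos[OF ip]
      by (intro div_anti) auto
    moreover have "c / sqrt (c * d) = sqrt (c / d)"
    proof -
      have cp: "c > 0" using big dpos by simp
      have "c / d * (c * d) = c^2" using dpos by (simp add: power2_eq_square)
      hence "sqrt (c / d) * sqrt (c * d) = c" using cp
        by (metis real_sqrt_mult real_sqrt_abs abs_of_pos)
      moreover have "sqrt (c * d) > 0" using cp dpos by simp
      ultimately show ?thesis by (metis divide_eq_eq less_irrefl)
    qed
    ultimately show ?thesis using upper[OF ip] by (metis order_trans)
  qed
  have U: "(SUP p\<in>frontier H2. g p) \<le> 2 * c / sqrt (4 * d^2 - c^2)" if small: "c < 2 * d"
  proof (rule cSUP_least[OF ne])
    fix p assume "p \<in> frontier H2"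
    hence ip: "Im p = 0" by (simp add: frontier_H2)
    have "Im (m - p) = d" using dm ip by simp
    hence "d \<le> norm (m - p)" using dpos by (metis abs_Im_le_cmod abs_of_pos)
    hence "d^2 \<le> (norm (m - p))^2" using dpos by (simp add: power_mono)
    have "(norm (m - p))^2 - (norm w)^2 \<le> norm ((m - p)^2 - w^2)"
      by (metis norm_triangle_ineq2 norm_power)
    hence "(4 * d^2 - c^2) / 4 \<le> norm (x - p) * norm (y - p)"
      using \<open>d^2 \<le> (norm (m - p))^2\<close> Nform[of p] cw by (simp add: power2_eq_square)
    hence "sqrt ((4 * d^2 - c^2) / 4) \<le> sqrt (norm (x - p) * norm (y - p))" by simp
    moreover have "4 * d^2 - c^2 > 0"
    proof -
      have "c^2 < (2*d)^2" using small cw by (simp add: power_strict_mono)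
      thus ?thesis by simp
    qed
    ultimately have "c / sqrt (norm (x - p) * norm (y - p)) \<le> c / (sqrt (4 * d^2 - c^2) / 2)"
      by (intro div_anti) (auto simp: c_def real_sqrt_divide)
    thus "g p \<le> 2 * c / sqrt (4 * d^2 - c^2)" by (simp add: g_def c_def mult.commute)
  qed
  have sqrt_pos: "sqrt (4 * d^2 + c^2) > 0" using dpos by (simp add: add_pos_nonneg)
  show ?thesis
    unfolding S_def c_def[symmetric]
  proof (intro conjI impI)
    show "(if c > 2 * d then ln (1 + sqrt (c / d))
           else ln (1 + 2 * c / sqrt (4 * d^2 + c^2))) \<le> ln (1 + (SUP p\<in>frontier H2. g p))"
    proof (cases "c > 2 * d")
      case True
      have "ln (1 + sqrt (c / d)) \<le> ln (1 + (SUP p\<in>frontier H2. g p))"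
        using L2[OF True] True dpos by (intro lnmono) auto
      then show ?thesis using True by simp
    next
      case False
      have "ln (1 + 2 * c / sqrt (4 * d^2 + c^2)) \<le> ln (1 + (SUP p\<in>frontier H2. g p))"
        using L1 sqrt_pos by (intro lnmono) (auto simp: c_def)
      then show ?thesis using False by simp
    qed
  next
    assume "c < 2 * d"
    thus "ln (1 + (SUP p\<in>frontier H2. g p)) \<le> ln (1 + 2 * c / sqrt (4 * d^2 - c^2))"
      using U Snn by (intro lnmono) auto
  qed
qed

end
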